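(* Let $n\ge 6$. Then the set \[D=\{(i,2i-1),(i,2i): 1\le i\le n-4\}\cup\{(n-3,2n-7),(n-2,2n-7),(n-1,2n-7),(n,2n-6)\}\] is an identifying code of $K_n\times K_{2n-5}$ of cardinality $2n-4$.
   Context: $K_n\times K_m$ is the direct product of complete graphs: vertex set $[n]\times[m]$, with $(i,r)$ adjacent to $(j,s)$ iff $i\ne j$ and $r \ne s$. An identifying code is a dominating set $C$ with $N[x]\cap C\ne N[y]\cap C$ for all distinct vertices $x,y$ ($N[x]$ the closed neighborhood). *)

theory Defs
  imports Main
begin

text \<open>Direct product of complete graphs K_n x K_m on vertex set [n] x [m].\<close>

definition KV :: "nat \<Rightarrow> nat \<Rightarrow> (nat \<times> nat) set" where
  "KV n m = {1..n} \<times> {1..m}"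

definition Kadj :: "nat \<times> nat \<Rightarrow> nat \<times> nat \<Rightarrow> bool" where
  "Kadj x y \<longleftrightarrow> fst x \<noteq> fst y \<and> snd x \<noteq> snd y"

definition closed_nbhd :: "nat \<Rightarrow> nat \<Rightarrow> nat \<times> nat \<Rightarrow> (nat \<times> nat) set" where
  "closed_nbhd n m x = {y \<in> KV n m. y = x \<or> Kadj x y}"

definition dominating :: "nat \<Rightarrow> nat \<Rightarrow> (nat \<times> nat) set \<Rightarrow> bool" where
  "dominating n m C \<longleftrightarrow> C \<subseteq> KV n m \<and> (\<forall>x \<in> KV n m. closed_nbhd n m x \<inter> C \<noteq> {})"

definition identifying_code :: "nat \<Rightarrow> nat \<Rightarrow> (nat \<times> nat) set \<Rightarrow> bool" where
  "identifying_code n m C \<longleftrightarrow> dominating n m C \<and>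
     (\<forall>x \<in> KV n m. \<forall>y \<in> KV n m. x \<noteq> y \<longrightarrow> closed_nbhd n m x \<inter> C \<noteq> closed_nbhd n m y \<inter> C)"

end

theory Submission
  imports Defs
begin

lemma colA:
  fixes n a b a' b' :: nat
  assumes n: "n \<ge> 6" and hyp: "a = a'" "b \<noteq> b'" "b \<noteq> 2*n-5"
    and xD: "\<not> ((1 \<le> a \<and> a \<le> n-4 \<and> (b = 2*a-1 \<or> b = 2*a)) \<or> (a,b) \<in> {(n - 3, 2*n - 7), (n - 2, 2*n - 7), (n - 1, 2*n - 7), (n, 2*n - 6)})"
    and rb: "1 \<le> b" "b \<le> 2*n-5"
   and MD: "\<And>c d. ((1 \<le> c \<and> c \<le> n-4 \<and> (d = 2*c-1 \<or> d = 2*c)) \<or> (c,d) \<in> {(n - 3, 2*n - 7), (n - 2, 2*n - 7), (n - 1, 2*n - 7), (n, 2*n - 6)})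
     \<Longrightarrow> (((c,d) = (a,b) \<or> (c \<noteq> a \<and> d \<noteq> b)) = ((c,d) = (a',b') \<or> (c \<noteq> a' \<and> d \<noteq> b')))"
  shows False
proof -
    consider "b \<le> 2*n-8" | "b = 2*n-7" | "b = 2*n-6" using hyp rb by linarith
    then show False
    proof cases
      case 1
      define k where "k = (b+1) div 2"
      have k: "1 \<le> k \<and> k \<le> n-4 \<and> (b = 2*k-1 \<or> b = 2*k)" unfolding k_def using 1 rb n by presburger
      show False using MD[of k b] k xD hyp by auto
    next
      case 2
      show False using MD[of "n-3" b] MD[of "n-2" b] xD hyp 2 n by auto
    next
      case 3
      show False using MD[of "n" b] MD[of "n-3" "2*n-7"] xD hyp 3 n by auto
    qed
qed

lemma idf:
  fixes n a b a' b' :: nat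
  assumes n: "n \<ge> 6" and ra: "1 \<le> a" "a \<le> n" and ra': "1 \<le> a'" "a' \<le> n"
   and rb: "1 \<le> b" "b \<le> 2*n-5" and rb': "1 \<le> b'" "b' \<le> 2*n-5"
   and ne: "(a,b) \<noteq> (a',b')"
   and MD: "\<And>c d. ((1 \<le> c \<and> c \<le> n-4 \<and> (d = 2*c-1 \<or> d = 2*c)) \<or> (c,d) \<in> {(n - 3, 2*n - 7), (n - 2, 2*n - 7), (n - 1, 2*n - 7), (n, 2*n - 6)})
     \<Longrightarrow> (((c,d) = (a,b) \<or> (c \<noteq> a \<and> d \<noteq> b)) = ((c,d) = (a',b') \<or> (c \<noteq> a' \<and> d \<noteq> b')))"
  shows False
proof -
  have xD: "\<not> ((1 \<le> a \<and> a \<le> n-4 \<and> (b = 2*a-1 \<or> b = 2*a)) \<or> (a,b) \<in> {(n - 3, 2*n - 7), (n - 2, 2*n - 7), (n - 1, 2*n - 7), (n, 2*n - 6)})"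
    if "a = a' \<or> b = b'"
    using MD[of a b] ne that by auto
  have yD: "\<not> ((1 \<le> a' \<and> a' \<le> n-4 \<and> (b' = 2*a'-1 \<or> b' = 2*a')) \<or> (a',b') \<in> {(n - 3, 2*n - 7), (n - 2, 2*n - 7), (n - 1, 2*n - 7), (n, 2*n - 6)})"
    if "a = a' \<or> b = b'"
    using MD[of a' b'] ne that by auto
  consider "a = a'" | "b = b'" | "a \<noteq> a'" "b \<noteq> b'" by blast
  then show False
  proof cases
    case 1
    then have "b \<noteq> b'" using ne by auto
    show False
    proof (cases "b = 2*n-5")
      case True
      then have "b' \<noteq> 2*n-5" using \<open>b \<noteq> b'\<close> by auto
      show False
        apply (rule colA[of n a' a b' b])
        using n 1 \<open>b \<noteq> b'\<close> \<open>b' \<noteq> 2*n-5\<close> yD rb' MD by auto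
    next
      case False
      show False
        apply (rule colA[of n a a' b b'])
        using n 1 \<open>b \<noteq> b'\<close> False xD rb MD by auto
    qed
  next
    case 2
    then have "a \<noteq> a'" using ne by auto
    consider "a \<le> n-4" | "a = n-3 \<or> a = n-2 \<or> a = n-1" | "a = n" using ra n by linarith
    then show False
    proof cases
      case 1 then show ?thesis using MD[of a "2*a-1"] xD 2 \<open>a \<noteq> a'\<close> ra by auto
    next
      case 3 then show ?thesis using MD[of a "2*n-6"] xD 2 \<open>a \<noteq> a'\<close> ra n by auto
    next
      case c: 2 then show ?thesis using MD[of a "2*n-7"] xD 2 \<open>a \<noteq> a'\<close> ra n by auto
    qed
  next
    case C: 3
    have 1: "b' = 2*a-1 \<or> (a,b) = (a,2*a-1)" if "a \<le> n-4"
    proof - have m: "((1 \<le> a \<and> a \<le> n-4 \<and> (2*a-1 = 2*a-1 \<or> 2*a-1 = 2*a)) \<or> (a,2*a-1) \<in> {(n - 3, 2*n - 7), (n - 2, 2*n - 7), (n - 1, 2*n - 7), (n, 2*n - 6)})" using that ra by auto show ?thesis using MD[OF m] C by auto qed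
    have 2: "b' = 2*a \<or> (a,b) = (a,2*a)" if "a \<le> n-4"
    proof - have m: "((1 \<le> a \<and> a \<le> n-4 \<and> (2*a = 2*a-1 \<or> 2*a = 2*a)) \<or> (a,2*a) \<in> {(n - 3, 2*n - 7), (n - 2, 2*n - 7), (n - 1, 2*n - 7), (n, 2*n - 6)})" using that ra by auto show ?thesis using MD[OF m] C by auto qed
    have 3: "b = 2*a'-1 \<or> (a',b') = (a',2*a'-1)" if "a' \<le> n-4"
    proof - have m: "((1 \<le> a' \<and> a' \<le> n-4 \<and> (2*a'-1 = 2*a'-1 \<or> 2*a'-1 = 2*a')) \<or> (a',2*a'-1) \<in> {(n - 3, 2*n - 7), (n - 2, 2*n - 7), (n - 1, 2*n - 7), (n, 2*n - 6)})" using that ra' by auto show ?thesis using MD[OF m] C by auto qed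
    have 4: "b = 2*a' \<or> (a',b') = (a',2*a')" if "a' \<le> n-4"
    proof - have m: "((1 \<le> a' \<and> a' \<le> n-4 \<and> (2*a' = 2*a'-1 \<or> 2*a' = 2*a')) \<or> (a',2*a') \<in> {(n - 3, 2*n - 7), (n - 2, 2*n - 7), (n - 1, 2*n - 7), (n, 2*n - 6)})" using that ra' by auto show ?thesis using MD[OF m] C by auto qed
    have 5: "b' = 2*n-7 \<or> (a,b) = (a,2*n-7)" if "n-3 \<le> a" "a \<le> n-1"
    proof - have "a = n-3 \<or> a = n-2 \<or> a = n-1" using that by linarith
      then have m: "((1 \<le> a \<and> a \<le> n-4 \<and> (2*n-7 = 2*a-1 \<or> 2*n-7 = 2*a)) \<or> (a,2*n-7) \<in> {(n - 3, 2*n - 7), (n - 2, 2*n - 7), (n - 1, 2*n - 7), (n, 2*n - 6)})" by auto show ?thesis using MD[OF m] C by auto qed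
    have 6: "b' = 2*n-6 \<or> (a,b) = (n,2*n-6)" if "a = n"
    proof - have m: "((1 \<le> n \<and> n \<le> n-4 \<and> (2*n-6 = 2*n-1 \<or> 2*n-6 = 2*n)) \<or> (n,2*n-6) \<in> {(n - 3, 2*n - 7), (n - 2, 2*n - 7), (n - 1, 2*n - 7), (n, 2*n - 6)})" by auto show ?thesis using MD[OF m] C that by auto qed
    have 7: "b = 2*n-7 \<or> (a',b') = (a',2*n-7)" if "n-3 \<le> a'" "a' \<le> n-1"
    proof - have "a' = n-3 \<or> a' = n-2 \<or> a' = n-1" using that by linarith
      then have m: "((1 \<le> a' \<and> a' \<le> n-4 \<and> (2*n-7 = 2*a'-1 \<or> 2*n-7 = 2*a')) \<or> (a',2*n-7) \<in> {(n - 3, 2*n - 7), (n - 2, 2*n - 7), (n - 1, 2*n - 7), (n, 2*n - 6)})" by auto show ?thesis using MD[OF m] C by auto qed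
    have 8: "b = 2*n-6 \<or> (a',b') = (n,2*n-6)" if "a' = n"
    proof - have m: "((1 \<le> n \<and> n \<le> n-4 \<and> (2*n-6 = 2*n-1 \<or> 2*n-6 = 2*n)) \<or> (n,2*n-6) \<in> {(n - 3, 2*n - 7), (n - 2, 2*n - 7), (n - 1, 2*n - 7), (n, 2*n - 6)})" by auto show ?thesis using MD[OF m] C that by auto qed
    consider "a \<le> n-4" "a' \<le> n-4" | "a \<le> n-4" "n-3 \<le> a'" | "n-3 \<le> a" "a' \<le> n-4" | "n-3 \<le> a" "n-3 \<le> a'"
      by linarith
    then show False
    proof cases
      case 1 then show ?thesis using 1 2 3 4 C ra ra' n by auto
    next
      case c: 2
      have "b \<le> 2*n-8" "b' \<le> 2*n - 8" using 1 2 c C n ra by auto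
      moreover have "b = 2*n-7 \<or> b' = 2*n-7 \<or> b = 2*n-6 \<or> b' = 2*n-6"
        proof (cases "a' = n")
          case True then show ?thesis using 8 by auto
        next
          case False then have "a' \<le> n-1" using ra' by linarith
          then show ?thesis using 7 c by auto
        qed
      ultimately show ?thesis using n by linarith
    next
      case c: 3
      have "b' \<le> 2*n-8" "b \<le> 2*n - 8" using 3 4 c C n ra' by auto
      moreover have "b = 2*n-7 \<or> b' = 2*n-7 \<or> b = 2*n-6 \<or> b' = 2*n-6"
        proof (cases "a = n")
          case True then show ?thesis using 6 by auto
        next
          case False then have "a \<le> n-1" using ra by linarith
          then show ?thesis using 5 c by auto
        qed
      ultimately show ?thesis using n by linarith
    next
      case c: 4
      have ex: "\<exists>r. (r = n-3 \<or> r = n-2 \<or> r = n-1) \<and> r \<noteq> a \<and> r \<noteq> a'"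
      proof (cases "n-3 \<noteq> a \<and> n-3 \<noteq> a'")
        case True then show ?thesis by blast
      next
        case F1: False
        show ?thesis
        proof (cases "n-2 \<noteq> a \<and> n-2 \<noteq> a'")
          case True then show ?thesis by blast
        next
          case False
          have "n-1 \<noteq> a \<and> n-1 \<noteq> a'" using F1 False C(1) n by linarith
          then show ?thesis by blast
        qed
      qed
      then obtain r where r: "r = n-3 \<or> r = n-2 \<or> r = n-1" "r \<noteq> a" "r \<noteq> a'" by blast
      have m: "((1 \<le> r \<and> r \<le> n-4 \<and> (2*n-7 = 2*r-1 \<or> 2*n-7 = 2*r)) \<or> (r,2*n-7) \<in> {(n - 3, 2*n - 7), (n - 2, 2*n - 7), (n - 1, 2*n - 7), (n, 2*n - 6)})"
        using r by auto
      have R: "(b = 2*n-7) = (b' = 2*n-7)" using MD[OF m] r by auto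
      have "n - 3 \<le> n - 1" by simp
      consider "a = n" | "a' = n" | "a \<le> n-1" "a' \<le> n-1" using C(1) ra ra' by linarith
      then show ?thesis
      proof cases
        case 1
        then have "a' \<le> n-1" "n-3 \<le> a'" using C(1) c ra' by auto
        then show ?thesis using 6[OF 1] 7 R C(2) n by auto
      next
        case 2
        then have "a \<le> n-1" "n-3 \<le> a" using C(1) c ra by auto
        then show ?thesis using 8[OF 2] 5 R C(2) n by auto
      next
        case 3
        then show ?thesis using 5 7 c R C(2) by auto
      qed
    qed
  qed
qed
theorem mainTheorem15:
  fixes n :: nat
  assumes "n \<ge> 6"
  defines "D \<equiv> {(i, 2*i - 1) | i. 1 \<le> i \<and> i \<le> n - 4} \<union> {(i, 2*i) | i. 1 \<le> i \<and> i \<le> n - 4}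
            \<union> {(n - 3, 2*n - 7), (n - 2, 2*n - 7), (n - 1, 2*n - 7), (n, 2*n - 6)}"
  shows "identifying_code n (2*n - 5) D \<and> card D = 2*n - 4"
proof -
  have n: "n \<ge> 6" by fact
  have memD: "(c,d) \<in> D \<longleftrightarrow> ((1 \<le> c \<and> c \<le> n-4 \<and> (d = 2*c-1 \<or> d = 2*c)) \<or> (c,d) \<in> {(n - 3, 2*n - 7), (n - 2, 2*n - 7), (n - 1, 2*n - 7), (n, 2*n - 6)})" for c d
    unfolding D_def by blast
  have sub: "D \<subseteq> KV n (2*n-5)"
  proof
    fix x assume "x \<in> D"
    then obtain c d where x: "x = (c,d)" and m: "(c,d) \<in> D" by (cases x) auto
    from m[unfolded memD] show "x \<in> KV n (2*n-5)" unfolding x KV_def using n by auto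
  qed
  have nb: "closed_nbhd n (2*n-5) x \<inter> D = {c \<in> D. c = x \<or> Kadj x c}" for x
    unfolding closed_nbhd_def using sub by auto
  have dom: "closed_nbhd n (2*n-5) x \<inter> D \<noteq> {}" if x: "x \<in> KV n (2*n-5)" for x
  proof -
    obtain a b where ab: "x = (a,b)" by (cases x)
    have cand: "(n-3, 2*n-7) \<in> D" "(n-2, 2*n-7) \<in> D" "(n, 2*n-6) \<in> D" "(1,1) \<in> D"
      unfolding memD using n by auto
    have "\<exists>c\<in>D. Kadj x c"
    proof (cases "b = 2*n-7 \<or> b = 2*n-6")
      case False
      show ?thesis
      proof (cases "a = n-3")
        case True then show ?thesis using False n by (intro bexI[OF _ cand(2)]) (auto simp: ab Kadj_def)
      next
        case F2: False then show ?thesis using False n by (intro bexI[OF _ cand(1)]) (auto simp: ab Kadj_def)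
      qed
    next
      case True
      then show ?thesis
      proof
        assume b: "b = 2*n-7"
        show ?thesis
        proof (cases "a = n")
          case True then show ?thesis using cand(4) b n unfolding ab Kadj_def by force
        next
          case False then show ?thesis using cand(3) b n unfolding ab Kadj_def by force
        qed
      next
        assume b: "b = 2*n-6"
        show ?thesis
        proof (cases "a = n-3")
          case True then show ?thesis using b n by (intro bexI[OF _ cand(2)]) (auto simp: ab Kadj_def)
        next
          case F2: False then show ?thesis using b n by (intro bexI[OF _ cand(1)]) (auto simp: ab Kadj_def)
        qed
      qed
    qed
    then show ?thesis unfolding nb by auto
  qed
  have ident: "closed_nbhd n (2*n-5) x \<inter> D \<noteq> closed_nbhd n (2*n-5) y \<inter> D"
    if x: "x \<in> KV n (2*n-5)" and y: "y \<in> KV n (2*n-5)" and ne: "x \<noteq> y" for x y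
  proof
    assume eq: "closed_nbhd n (2*n-5) x \<inter> D = closed_nbhd n (2*n-5) y \<inter> D"
    obtain a b where ab: "x = (a,b)" by (cases x)
    obtain a' b' where ab': "y = (a',b')" by (cases y)
    have E: "(c \<in> D \<and> (c = x \<or> Kadj x c)) = (c \<in> D \<and> (c = y \<or> Kadj y c))" for c
      using eq unfolding nb by blast
    show False
    proof (rule idf[of n a a' b b'])
      show "6 \<le> n" by fact
      show "1 \<le> a" "a \<le> n" "1 \<le> b" "b \<le> 2*n-5" using x unfolding ab KV_def by auto
      show "1 \<le> a'" "a' \<le> n" "1 \<le> b'" "b' \<le> 2*n-5" using y unfolding ab' KV_def by auto
      show "(a,b) \<noteq> (a',b')" using ne ab ab' by simp
    next
      fix c d
      assume "((1 \<le> c \<and> c \<le> n-4 \<and> (d = 2*c-1 \<or> d = 2*c)) \<or> (c,d) \<in> {(n - 3, 2*n - 7), (n - 2, 2*n - 7), (n - 1, 2*n - 7), (n, 2*n - 6)})"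
      then have "(c,d) \<in> D" unfolding memD .
      then show "(((c,d) = (a,b) \<or> (c \<noteq> a \<and> d \<noteq> b)) = ((c,d) = (a',b') \<or> (c \<noteq> a' \<and> d \<noteq> b')))"
        using E[of "(c,d)"] unfolding ab ab' Kadj_def by auto
    qed
  qed
  have IC: "identifying_code n (2*n - 5) D"
    unfolding identifying_code_def dominating_def using sub dom ident by blast
  define A1 where "A1 = (\<lambda>i. (i, 2*i - 1)) ` {1..n-4}"
  define A2 where "A2 = (\<lambda>i. (i, 2*i)) ` {1..n-4}"
  define F where "F = {(n - 3, 2*n - 7), (n - 2, 2*n - 7), (n - 1, 2*n - 7), (n, (2*n - 6::nat))}"
  have DD: "D = A1 \<union> A2 \<union> F" unfolding D_def A1_def A2_def F_def by auto
  have c1: "card A1 = n - 4" unfolding A1_def by (subst card_image) (auto simp: inj_on_def)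
  have c2: "card A2 = n - 4" unfolding A2_def by (subst card_image) (auto simp: inj_on_def)
  have cF: "card F = 4"
  proof -
    have "n - 3 \<noteq> n - 2" "n - 3 \<noteq> n - 1" "n - 2 \<noteq> n - 1" "n - 3 \<noteq> n" "n-2 \<noteq> n" "n-1 \<noteq> n" using n by auto
    then show ?thesis unfolding F_def by simp
  qed
  have d12: "A1 \<inter> A2 = {}" unfolding A1_def A2_def by auto
  have d3: "(A1 \<union> A2) \<inter> F = {}" unfolding A1_def A2_def F_def using n by auto
  have "card D = card (A1 \<union> A2) + card F" unfolding DD
    by (rule card_Un_disjoint) (use d3 in \<open>auto simp: A1_def A2_def F_def\<close>)
  also have "card (A1 \<union> A2) = card A1 + card A2"
    by (rule card_Un_disjoint) (use d12 in \<open>auto simp: A1_def A2_def\<close>)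
  finally have "card D = 2*n - 4" using c1 c2 cF n by simp
  with IC show ?thesis by simp
qed

end
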